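(* Let $n \ge 2$ and let $n_1, m_1$ be nonzero integers, and let $\mathcal{P} = \mathcal{P}_n(n_1;m_1)$. Then: (i) there exist integers $n_1', m_1'$ with $1 \le n_1', m_1' \le \lceil n/2 \rceil$ and $\mathcal{P} \simeq_Q \mathcal{P}_n(n_1';m_1')$; (ii) if $n_1 = 1$ or $m_1 = 1$, then $\mathcal{P}_n(n_1;m_1) \simeq_Q \mathcal{P}_n^{\mathrm{std}}$.
   Context: For integers $n_1,m_1$, $\mathcal{P}_n(n_1;m_1) = \langle x, y \mid x^n y^{-2},\ x^{n_1} y x^{m_1} y^{-1} x^{1-n_1} y x^{1-m_1} y^{-1} \rangle$, and $\mathcal{P}_n^{\mathrm{std}} = \langle x,y \mid x^ny^{-2}, xyxy^{-1}\rangle$. Two finite presentations on the same generators are $Q$-equivalent ($\simeq_Q$) if related by a finite sequence of the moves: replace a relator $r_i$ by $r_ir_j$ ($j\neq i$); replace $r_i$ by $r_i^{-1}$; replace $r_i$ by $wr_iw^{-1}$ for some $w$ in the free group on the generators. *)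

theory Defs
  imports Complex_Main
begin

datatype gen = X | Y

text \<open>A letter is (inverted?, generator); (False, g) is g, (True, g) is g^-1.\<close>
type_synonym letter = "bool \<times> gen"
type_synonym word = "letter list"

fun red :: "word \<Rightarrow> word" where
  "red [] = []"
| "red (a # w) = (case red w of
      [] \<Rightarrow> [a]
    | b # w' \<Rightarrow> (if fst b \<noteq> fst a \<and> snd b = snd a then w' else a # b # w'))"

definition fmul :: "word \<Rightarrow> word \<Rightarrow> word" where
  "fmul u v = red (u @ v)"

definition finv :: "word \<Rightarrow> word" where
  "finv w = rev (map (\<lambda>(b, g). (\<not> b, g)) w)"

definition gpow :: "gen \<Rightarrow> int \<Rightarrow> word" where
  "gpow g k = (if 0 \<le> k then replicate (nat k) (False, g) else replicate (nat (- k)) (True, g))"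

text \<open>Relators as (reduced) elements of the free group on x, y; a presentation on
  the generators x, y is the list of its relators.\<close>
definition P_n :: "nat \<Rightarrow> int \<Rightarrow> int \<Rightarrow> word list" where
  "P_n n n1 m1 =
    [ red (gpow X (int n) @ gpow Y (-2)),
      red (gpow X n1 @ gpow Y 1 @ gpow X m1 @ gpow Y (-1) @ gpow X (1 - n1)
           @ gpow Y 1 @ gpow X (1 - m1) @ gpow Y (-1)) ]"

definition P_std :: "nat \<Rightarrow> word list" where
  "P_std n =
    [ red (gpow X (int n) @ gpow Y (-2)),
      red (gpow X 1 @ gpow Y 1 @ gpow X 1 @ gpow Y (-1)) ]"

definition qmove :: "word list \<Rightarrow> word list \<Rightarrow> bool" where
  "qmove rs rs' \<longleftrightarrow>
     (\<exists>i j. i < length rs \<and> j < length rs \<and> i \<noteq> j \<and> rs' = rs[i := fmul (rs ! i) (rs ! j)])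
   \<or> (\<exists>i. i < length rs \<and> rs' = rs[i := finv (rs ! i)])
   \<or> (\<exists>i w. i < length rs \<and> rs' = rs[i := fmul (fmul w (rs ! i)) (finv w)])"

definition Q_equiv :: "word list \<Rightarrow> word list \<Rightarrow> bool" (infix "\<simeq>\<^sub>Q" 50) where
  "Q_equiv rs rs' \<longleftrightarrow> qmove\<^sup>*\<^sup>* rs rs'"

end

theory Submission
  imports Defs
begin


definition flp :: "letter \<Rightarrow> letter" where "flp l = (\<not> fst l, snd l)"

definition canc :: "letter \<Rightarrow> letter \<Rightarrow> bool" where
  "canc a b \<longleftrightarrow> fst b \<noteq> fst a \<and> snd b = snd a"

definition stp :: "letter \<Rightarrow> word \<Rightarrow> word" where
  "stp a r = (case r of [] \<Rightarrow> [a] | b # r' \<Rightarrow> (if canc a b then r' else a # b # r'))"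

lemma red_Cons: "red (a # w) = stp a (red w)"
  by (simp add: stp_def canc_def split: list.split)

declare red.simps(2)[simp del]

definition reduced :: "word \<Rightarrow> bool" where
  "reduced w = successively (\<lambda>a b. \<not> canc a b) w"

lemma reduced_stp: "reduced r \<Longrightarrow> reduced (stp a r)"
  by (cases r) (auto simp: stp_def reduced_def successively_Cons split: list.splits)

lemma reduced_red: "reduced (red w)"
  by (induction w) (auto simp: red_Cons intro: reduced_stp[unfolded reduced_def] simp: reduced_def)

lemma red_reduced: "reduced w \<Longrightarrow> red w = w"
proof (induction w)
  case Nil then show ?case by simp
next
  case (Cons a w)
  then have "reduced w" by (auto simp: reduced_def successively_Cons)
  with Cons show ?case
    by (cases w) (auto simp: red_Cons stp_def reduced_def successively_Cons)
qed

lemma red_red[simp]: "red (red w) = red w"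
  by (simp add: red_reduced reduced_red)

lemma red_append_right: "red (u @ v) = red (u @ red v)"
  by (induction u) (auto simp: red_Cons)

lemma stp_cancel: "reduced r \<Longrightarrow> canc a b \<Longrightarrow> stp a (stp b r) = r"
  by (cases r) (auto simp: stp_def canc_def reduced_def successively_Cons prod_eq_iff split: list.splits)

lemma stp_red_append: "reduced s \<Longrightarrow> stp a (red (s @ v)) = red (stp a s @ v)"
proof (cases s)
  case Nil then show ?thesis by (simp add: stp_def red_Cons)
next
  case (Cons b s')
  assume r: "reduced s"
  show ?thesis
  proof (cases "canc a b")
    case True
    have "stp a (red (s @ v)) = stp a (stp b (red (s' @ v)))" using Cons by (simp add: red_Cons)
    also have "\<dots> = red (s' @ v)" using True
      by (intro stp_cancel reduced_red) (auto simp: canc_def)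
    finally show ?thesis using Cons True by (simp add: stp_def)
  next
    case False
    then show ?thesis using Cons by (simp add: stp_def red_Cons)
  qed
qed

lemma red_append_left: "red (u @ v) = red (red u @ v)"
proof (induction u)
  case Nil then show ?case by simp
next
  case (Cons a u)
  have "red ((a # u) @ v) = stp a (red (u @ v))" by (simp add: red_Cons)
  also have "\<dots> = stp a (red (red u @ v))" using Cons by simp
  also have "\<dots> = red (stp a (red u) @ v)" by (rule stp_red_append[OF reduced_red])
  finally show ?case by (simp add: red_Cons)
qed

lemma finv_append[simp]: "finv (u @ v) = finv v @ finv u"
  by (simp add: finv_def)
lemma finv_finv[simp]: "finv (finv u) = u"
  by (simp add: finv_def rev_map map_map case_prod_beta comp_def)
lemma finv_Cons: "finv (a # u) = finv u @ [flp a]"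
  by (simp add: finv_def flp_def case_prod_beta)
lemma finv_Nil[simp]: "finv [] = []" by (simp add: finv_def)

lemma red_inv_right[simp]: "red (u @ finv u) = []"
proof (induction u)
  case Nil then show ?case by simp
next
  case (Cons a u)
  have "red ((a # u) @ finv (a # u)) = stp a (red ((u @ finv u) @ [flp a]))"
    by (simp add: finv_Cons red_Cons)
  also have "red ((u @ finv u) @ [flp a]) = [flp a]"
    by (subst red_append_left) (simp add: Cons red_Cons stp_def)
  finally show ?case by (simp add: stp_def canc_def flp_def)
qed

lemma red_inv_left[simp]: "red (finv u @ u) = []"
  using red_inv_right[of "finv u"] by simp

lemma reduced_finv: "reduced w \<Longrightarrow> reduced (finv w)"
  by (auto simp: reduced_def finv_def successively_map canc_def case_prod_beta
      elim!: successively_mono)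

lemma red_cancel_mid: "canc a b \<Longrightarrow> red (u @ a # b # v) = red (u @ v)"
proof -
  assume c: "canc a b"
  have "red (a # b # v) = red v"
    by (simp add: red_Cons stp_cancel[OF reduced_red c])
  then show ?thesis by (metis red_append_right)
qed

lemma red_rep_cancel:
  assumes "canc l m"
  shows "red (replicate p l @ replicate q m) =
    red (if q \<le> p then replicate (p - q) l else replicate (q - p) m)"
proof (induction p arbitrary: q)
  case 0 then show ?case by simp
next
  case (Suc p)
  show ?case
  proof (cases q)
    case 0 then show ?thesis by simp
  next
    case (Suc q')
    have "replicate (Suc p) l @ replicate q m = replicate p l @ l # m # replicate q' m"
      using Suc by (simp add: replicate_app_Cons_same)
    then have "red (replicate (Suc p) l @ replicate q m) = red (replicate p l @ replicate q' m)"
      using red_cancel_mid[OF assms] by simp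
    then show ?thesis using Suc.IH[of q'] Suc by simp
  qed
qed

lemma gpow_add: "red (gpow g a @ gpow g b) = red (gpow g (a + b))"
proof -
  have c1: "canc (False, g) (True, g)" and c2: "canc (True, g) (False, g)" by (auto simp: canc_def)
  consider "0 \<le> a" "0 \<le> b" | "a < 0" "b < 0" | "0 \<le> a" "b < 0" | "a < 0" "0 \<le> b" by linarith
  then show ?thesis
  proof cases
    case 1 then show ?thesis by (simp add: gpow_def replicate_add[symmetric] nat_add_distrib)
  next
    case 2 then show ?thesis by (simp add: gpow_def replicate_add[symmetric] nat_add_distrib[symmetric])
  next
    case 3 then show ?thesis
      by (simp add: gpow_def red_rep_cancel[OF c1]) (auto simp: nat_diff_distrib' intro!: arg_cong[where f = red] arg_cong2[where f=replicate])
  next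
    case 4 then show ?thesis
      by (simp add: gpow_def red_rep_cancel[OF c2]) (auto simp: nat_diff_distrib' intro!: arg_cong[where f = red] arg_cong2[where f=replicate])
  qed
qed



definition req :: "word \<Rightarrow> word \<Rightarrow> bool" where "req u v \<longleftrightarrow> red u = red v"

quotient_type fg = word / req
  by (rule equivpI) (auto simp: reflp_def symp_def transp_def req_def)

lemma req_append: "red u = red u' \<Longrightarrow> red v = red v' \<Longrightarrow> red (u @ v) = red (u' @ v')"
  by (metis red_append_left red_append_right)

lemma req_finv: assumes "red u = red v" shows "red (finv u) = red (finv v)"
proof -
  have "red (finv u) = red (finv u @ (v @ finv v))"
    by (subst red_append_right) simp
  also have "\<dots> = red (red (finv u @ v) @ finv v)"
    by (metis append_assoc red_append_left)
  also have "red (finv u @ v) = []"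
    by (metis assms red_append_right red_inv_left)
  finally show ?thesis by simp
qed

instantiation fg :: group_add
begin
lift_definition zero_fg :: fg is "[]" .
lift_definition plus_fg :: "fg \<Rightarrow> fg \<Rightarrow> fg" is "(@)"
  unfolding req_def by (rule req_append)
lift_definition uminus_fg :: "fg \<Rightarrow> fg" is finv
  unfolding req_def by (rule req_finv)
lift_definition minus_fg :: "fg \<Rightarrow> fg \<Rightarrow> fg" is "\<lambda>u v. u @ finv v"
  unfolding req_def by (intro req_append req_finv)
instance
proof
  fix a b c :: fg
  show "a + b + c = a + (b + c)" by transfer (simp add: req_def)
  show "0 + a = a" by transfer (simp add: req_def)
  show "a + 0 = a" by transfer (simp add: req_def)
  show "- a + a = 0" by transfer (simp add: req_def)
  show "a + - b = a - b" by transfer (simp add: req_def)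
qed
end

lemma abs_eq_iff: "abs_fg u = abs_fg v \<longleftrightarrow> red u = red v"
  by (simp add: fg.abs_eq_iff req_def)

lemma abs_append: "abs_fg (u @ v) = abs_fg u + abs_fg v"
  by (simp add: plus_fg.abs_eq)

lemma abs_finv: "abs_fg (finv u) = - abs_fg u"
  by (simp add: uminus_fg.abs_eq)

lemma abs_red: "abs_fg (red u) = abs_fg u"
  by (simp add: abs_eq_iff)

definition gx :: "int \<Rightarrow> fg" where "gx k = abs_fg (gpow X k)"
definition gy :: "int \<Rightarrow> fg" where "gy k = abs_fg (gpow Y k)"

lemma gx_add: "gx (a + b) = gx a + gx b"
  by (simp add: gx_def abs_append[symmetric] abs_eq_iff gpow_add)
lemma gy_add: "gy (a + b) = gy a + gy b"
  by (simp add: gy_def abs_append[symmetric] abs_eq_iff gpow_add)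
lemma gx0[simp]: "gx 0 = 0" by (simp add: gx_def gpow_def zero_fg_def)
lemma gy0[simp]: "gy 0 = 0" by (simp add: gy_def gpow_def zero_fg_def)
lemma gx_neg: "gx (- a) = - gx a"
  by (metis add.commute gx0 gx_add minus_unique right_minus)
lemma gy_neg: "gy (- a) = - gy a"
  by (metis add.commute gy0 gy_add minus_unique right_minus)



lemma abs_rep[simp]: "abs_fg (rep_fg x) = x"
  by (rule Quotient3_abs_rep[OF Quotient3_fg])

lemma red_eqI: "abs_fg u = abs_fg v \<Longrightarrow> red u = red v"
  by (simp add: abs_eq_iff)

lemma abs_fmul: "abs_fg (fmul u v) = abs_fg u + abs_fg v"
  by (simp add: fmul_def abs_red abs_append)

inductive_set NC :: "fg \<Rightarrow> fg set" for r :: fg where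
  NC0: "0 \<in> NC r"
| NCp: "u \<in> NC r \<Longrightarrow> u + (w + r - w) \<in> NC r"
| NCm: "u \<in> NC r \<Longrightarrow> u + (w - r - w) \<in> NC r"

lemma NC_add: "v \<in> NC r \<Longrightarrow> u \<in> NC r \<Longrightarrow> u + v \<in> NC r"
proof (induction v rule: NC.induct)
  case NC0 then show ?case by (simp add: NC.NC0)
next
  case (NCp v w) then show ?case using NC.NCp[of "u + v" r w] by (simp add: add.assoc)
next
  case (NCm v w) then show ?case using NC.NCm[of "u + v" r w] by (simp add: add.assoc)
qed

lemma NC_genp: "w + r - w \<in> NC r" using NC.NCp[OF NC.NC0[of r], of w] by simp
lemma NC_genm: "w - r - w \<in> NC r" using NC.NCm[OF NC.NC0[of r], of w] by simp

lemma NC_uminus: "u \<in> NC r \<Longrightarrow> - u \<in> NC r"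
proof (induction u rule: NC.induct)
  case NC0 then show ?case by (simp add: NC.NC0)
next
  case (NCp u w)
  have "- (u + (w + r - w)) = (w - r - w) + - u" by (simp add: minus_add diff_conv_add_uminus add.assoc del: add_uminus_conv_diff)
  then show ?case using NC_add[OF NCp.IH NC_genm] by simp
next
  case (NCm u w)
  have "- (u + (w - r - w)) = (w + r - w) + - u" by (simp add: minus_add diff_conv_add_uminus add.assoc del: add_uminus_conv_diff)
  then show ?case using NC_add[OF NCm.IH NC_genp] by simp
qed

lemma NC_conj: "u \<in> NC r \<Longrightarrow> p + u - p \<in> NC r"
proof (induction u rule: NC.induct)
  case NC0 then show ?case by (simp add: NC.NC0)
next
  case (NCp u w)
  have "p + (u + (w + r - w)) - p = (p + u - p) + ((p + w) + r - (p + w))"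
    by (simp add: minus_add diff_conv_add_uminus add.assoc del: add_uminus_conv_diff)
  then show ?case using NC_add[OF NC_genp NCp.IH] by simp
next
  case (NCm u w)
  have "p + (u + (w - r - w)) - p = (p + u - p) + ((p + w) - r - (p + w))"
    by (simp add: minus_add diff_conv_add_uminus add.assoc del: add_uminus_conv_diff)
  then show ?case using NC_add[OF NC_genm NCm.IH] by simp
qed

definition r0 :: "nat \<Rightarrow> fg" where "r0 n = gx (int n) + gy (-2)"

definition eqv :: "nat \<Rightarrow> fg \<Rightarrow> fg \<Rightarrow> bool" where
  "eqv n u v \<longleftrightarrow> - u + v \<in> NC (r0 n)"

lemma eqv_refl: "eqv n u u" by (simp add: eqv_def NC.NC0)

lemma eqv_sym: "eqv n u v \<Longrightarrow> eqv n v u"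
  unfolding eqv_def by (drule NC_uminus) (simp add: minus_add)

lemma eqv_trans: "eqv n u v \<Longrightarrow> eqv n v w \<Longrightarrow> eqv n u w"
  unfolding eqv_def by (drule (1) NC_add) (simp add: add.assoc)

lemma eqv_cong: "eqv n u v \<Longrightarrow> eqv n (p + u + q) (p + v + q)"
  unfolding eqv_def
proof -
  assume "- u + v \<in> NC (r0 n)"
  from NC_conj[OF this, of "- q"]
  show "- (p + u + q) + (p + v + q) \<in> NC (r0 n)"
    by (simp add: minus_add diff_conv_add_uminus add.assoc del: add_uminus_conv_diff)
qed

lemma eqv_congL: "eqv n u v \<Longrightarrow> eqv n (p + u) (p + v)"
  using eqv_cong[of n u v p 0] by simp
lemma eqv_congR: "eqv n u v \<Longrightarrow> eqv n (u + q) (v + q)"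
  using eqv_cong[of n u v 0 q] by simp

lemma eqv_base: "eqv n (gx (int n)) (gy 2)"
proof -
  have "gy 2 = - gy (-2)" by (simp add: gy_neg[symmetric])
  then have "- gx (int n) + gy 2 = 0 + ((- gx (int n)) - r0 n - (- gx (int n)))"
    by (simp add: r0_def minus_add diff_conv_add_uminus add.assoc del: add_uminus_conv_diff)
  then show ?thesis unfolding eqv_def using NC.NCm[OF NC.NC0] by metis
qed

lemma abs_letter: "abs_fg [l] \<in> {gx 1, gx (-1), gy 1, gy (-1)}"
  by (cases l; cases "fst l"; cases "snd l") (auto simp: gx_def gy_def gpow_def)

lemma central_letter:
  assumes "x \<in> {gx 1, gx (-1), gy 1, gy (-1)}"
  shows "eqv n (gx (int n) + x) (x + gx (int n))"
proof -
  have gxc: "gx a + gx b = gx b + gx a" for a b by (metis add.commute gx_add)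
  have gyc: "gy a + gy b = gy b + gy a" for a b by (metis add.commute gy_add)
  have gyl: "eqv n (gx (int n) + gy k) (gy k + gx (int n))" for k
  proof -
    have "eqv n (gx (int n) + gy k) (gy 2 + gy k)" by (rule eqv_congR[OF eqv_base])
    moreover have "eqv n (gy k + gy 2) (gy k + gx (int n))" by (rule eqv_congL[OF eqv_sym[OF eqv_base]])
    ultimately show ?thesis using gyc eqv_trans by metis
  qed
  from assms show ?thesis using gxc eqv_refl gyl by auto
qed

lemma central_word: "eqv n (gx (int n) + abs_fg w) (abs_fg w + gx (int n))"
proof (induction w)
  case Nil
  have "abs_fg [] = 0" by (simp add: zero_fg.abs_eq)
  then show ?case by (simp add: eqv_refl)
next
  case (Cons l w)
  have e: "abs_fg (l # w) = abs_fg [l] + abs_fg w" by (simp add: abs_append[symmetric])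
  have "eqv n (gx (int n) + abs_fg [l] + abs_fg w) (abs_fg [l] + gx (int n) + abs_fg w)"
    by (rule eqv_congR[OF central_letter[OF abs_letter]])
  moreover have "eqv n (abs_fg [l] + (gx (int n) + abs_fg w)) (abs_fg [l] + (abs_fg w + gx (int n)))"
    by (rule eqv_congL[OF Cons])
  ultimately have "eqv n (gx (int n) + abs_fg [l] + abs_fg w) (abs_fg [l] + abs_fg w + gx (int n))"
    by (simp add: add.assoc eqv_trans[where v = "abs_fg [l] + gx (int n) + abs_fg w"])
  then show ?case unfolding e by (simp add: add.assoc)
qed

lemma central: "eqv n (gx (int n) + u) (u + gx (int n))"
  using central_word[of n "rep_fg u"] by simp



definition r1 :: "nat \<Rightarrow> word" where "r1 n = red (gpow X (int n) @ gpow Y (-2))"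

lemma abs_r1: "abs_fg (r1 n) = r0 n"
  by (simp add: r1_def r0_def abs_red abs_append gx_def gy_def)

lemma red_r1: "red (r1 n) = r1 n" by (simp add: r1_def)

lemma reduced_finv_r1: "red (finv (r1 n)) = finv (r1 n)"
  by (simp add: r1_def red_reduced reduced_finv reduced_red)

lemma qm_mul: "qmove [a, b] [a, fmul b a]"
  unfolding qmove_def by (rule disjI1, rule exI[of _ 1], rule exI[of _ 0]) simp
lemma qm_inv: "qmove [a, b] [finv a, b]"
  unfolding qmove_def by (rule disjI2, rule disjI1, rule exI[of _ 0]) simp
lemma qm_conj0: "qmove [a, b] [fmul (fmul w a) (finv w), b]"
  unfolding qmove_def by (rule disjI2, rule disjI2, rule exI[of _ 0], rule exI[of _ w]) simp
lemma qm_conj1: "qmove [a, b] [a, fmul (fmul w b) (finv w)]"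
  unfolding qmove_def by (rule disjI2, rule disjI2, rule exI[of _ 1], rule exI[of _ w]) simp

lemma Q_trans[trans]: "P \<simeq>\<^sub>Q Q \<Longrightarrow> Q \<simeq>\<^sub>Q R \<Longrightarrow> P \<simeq>\<^sub>Q R"
  unfolding Q_equiv_def by (rule rtranclp_trans)
lemma Q_step: "qmove P Q \<Longrightarrow> P \<simeq>\<^sub>Q Q"
  unfolding Q_equiv_def by (rule r_into_rtranclp)
lemma Q_refl: "P \<simeq>\<^sub>Q P"
  unfolding Q_equiv_def by simp

lemma fmul_red: "red (fmul u v) = fmul u v" by (simp add: fmul_def)

lemma Q_NC:
  assumes "u \<in> NC (r0 n)"
  shows "abs_fg R' = abs_fg R + u \<Longrightarrow> [r1 n, red R] \<simeq>\<^sub>Q [r1 n, red R']"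
  using assms
proof (induction u arbitrary: R' rule: NC.induct)
  case NC0
  then have "red R = red R'" by (intro red_eqI) simp
  then show ?case by (simp add: Q_refl)
next
  case (NCp u w)
  define Ru where "Ru = rep_fg (abs_fg R + u)"
  define W where "W = rep_fg w"
  have IH: "[r1 n, red R] \<simeq>\<^sub>Q [r1 n, red Ru]" using NCp.IH by (simp add: Ru_def)
  define c where "c = fmul (fmul W (r1 n)) (finv W)"
  have "[r1 n, red Ru] \<simeq>\<^sub>Q [c, red Ru]" unfolding c_def by (rule Q_step[OF qm_conj0])
  also have "\<dots> \<simeq>\<^sub>Q [c, fmul (red Ru) c]" by (rule Q_step[OF qm_mul])
  also have "\<dots> \<simeq>\<^sub>Q [fmul (fmul (finv W) c) (finv (finv W)), fmul (red Ru) c]"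
    by (rule Q_step[OF qm_conj0])
  also have "fmul (fmul (finv W) c) (finv (finv W)) = r1 n"
  proof -
    have "red (fmul (fmul (finv W) c) (finv (finv W))) = red (r1 n)"
      by (rule red_eqI) (simp add: c_def abs_fmul abs_finv abs_r1 W_def add.assoc)
    then show ?thesis by (simp add: fmul_red red_r1)
  qed
  also have "fmul (red Ru) c = red R'"
  proof -
    have "red (fmul (red Ru) c) = red R'"
      by (rule red_eqI) (simp add: NCp.prems c_def abs_fmul abs_finv abs_r1 W_def Ru_def abs_red add.assoc)
    then show ?thesis by (simp add: fmul_red)
  qed
  finally show ?case by (rule Q_trans[OF IH])
next
  case (NCm u w)
  define Ru where "Ru = rep_fg (abs_fg R + u)"
  define W where "W = rep_fg w"
  have IH: "[r1 n, red R] \<simeq>\<^sub>Q [r1 n, red Ru]" using NCm.IH by (simp add: Ru_def)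
  define c where "c = fmul (fmul W (finv (r1 n))) (finv W)"
  have "[r1 n, red Ru] \<simeq>\<^sub>Q [finv (r1 n), red Ru]" by (rule Q_step[OF qm_inv])
  also have "\<dots> \<simeq>\<^sub>Q [c, red Ru]" unfolding c_def by (rule Q_step[OF qm_conj0])
  also have "\<dots> \<simeq>\<^sub>Q [c, fmul (red Ru) c]" by (rule Q_step[OF qm_mul])
  also have "\<dots> \<simeq>\<^sub>Q [fmul (fmul (finv W) c) (finv (finv W)), fmul (red Ru) c]"
    by (rule Q_step[OF qm_conj0])
  also have "fmul (fmul (finv W) c) (finv (finv W)) = finv (r1 n)"
  proof -
    have "red (fmul (fmul (finv W) c) (finv (finv W))) = red (finv (r1 n))"
      by (rule red_eqI) (simp add: c_def abs_fmul abs_finv abs_r1 W_def add.assoc diff_conv_add_uminus del: add_uminus_conv_diff)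
    then show ?thesis by (simp add: fmul_red reduced_finv_r1)
  qed
  also have "[finv (r1 n), fmul (red Ru) c] \<simeq>\<^sub>Q [finv (finv (r1 n)), fmul (red Ru) c]"
    by (rule Q_step[OF qm_inv])
  also have "fmul (red Ru) c = red R'"
  proof -
    have "red (fmul (red Ru) c) = red R'"
      by (rule red_eqI) (simp add: NCm.prems c_def abs_fmul abs_finv abs_r1 W_def Ru_def abs_red add.assoc diff_conv_add_uminus del: add_uminus_conv_diff)
    then show ?thesis by (simp add: fmul_red)
  qed
  finally show ?case using IH Q_trans by simp
qed

lemma master:
  assumes "eqv n (w + abs_fg R - w) (abs_fg R')"
  shows "[r1 n, red R] \<simeq>\<^sub>Q [r1 n, red R']"
proof -
  define W where "W = rep_fg w"
  define R0 where "R0 = fmul (fmul W (red R)) (finv W)"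
  have "[r1 n, red R] \<simeq>\<^sub>Q [r1 n, R0]" unfolding R0_def by (rule Q_step[OF qm_conj1])
  also have "R0 = red R0" by (simp add: R0_def fmul_red)
  also have "[r1 n, red R0] \<simeq>\<^sub>Q [r1 n, red R']"
  proof (rule Q_NC)
    show "- abs_fg R0 + abs_fg R' \<in> NC (r0 n)"
      using assms unfolding eqv_def
      by (simp add: R0_def abs_fmul abs_finv abs_red W_def diff_conv_add_uminus del: add_uminus_conv_diff)
    show "abs_fg R' = abs_fg R0 + (- abs_fg R0 + abs_fg R')" by (simp add: add.assoc[symmetric])
  qed
  finally show ?thesis .
qed



definition Rw :: "int \<Rightarrow> int \<Rightarrow> word" where
  "Rw a b = gpow X a @ gpow Y 1 @ gpow X b @ gpow Y (-1) @ gpow X (1 - a)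
           @ gpow Y 1 @ gpow X (1 - b) @ gpow Y (-1)"

definition Rf :: "int \<Rightarrow> int \<Rightarrow> fg" where
  "Rf a b = gx a + gy 1 + gx b + - gy 1 + gx (1 - a) + gy 1 + gx (1 - b) + - gy 1"

lemma gym1: "gy (-1) = - gy 1" by (simp add: gy_neg[symmetric])
lemma gy2: "gy 2 = gy 1 + gy 1" by (simp add: gy_add[symmetric])
lemma gym2: "gy (-2) = - gy 1 + - gy 1" by (simp add: gy_neg[symmetric] gy_add[symmetric])

lemma abs_Rw: "abs_fg (Rw a b) = Rf a b"
  by (simp add: Rw_def Rf_def abs_append gx_def[symmetric] gy_def[symmetric] gym1 add.assoc diff_conv_add_uminus del: add_uminus_conv_diff)

lemma P_n_Rw: "P_n n a b = [r1 n, red (Rw a b)]"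
  by (simp add: P_n_def r1_def Rw_def)

lemma Q_Rf:
  assumes "eqv n (w + Rf a b - w) (Rf a' b')"
  shows "P_n n a b \<simeq>\<^sub>Q P_n n a' b'"
  unfolding P_n_Rw by (rule master[where w=w]) (simp add: abs_Rw assms)

lemma G1: "eqv n (Rf (a + int n) b) (Rf a b)"
proof -
  let ?N = "gx (int n)"
  define U where "U = gy 1 + gx b + - gy 1 + gx (1 - a)"
  define V where "V = gy 1 + gx (1 - b) + - gy 1"
  have e1: "gx (1 - (a + int n)) = gx (1 - a) + - ?N"
    by (metis add_uminus_conv_diff diff_diff_eq gx_add gx_neg)
  have "Rf (a + int n) b = gx a + (?N + U) + (- ?N + V)"
    by (simp add: Rf_def e1 gx_add U_def V_def add.assoc del: add_uminus_conv_diff)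
  moreover have "Rf a b = gx a + (U + ?N) + (- ?N + V)"
    by (simp add: Rf_def U_def V_def add.assoc del: add_uminus_conv_diff)
  ultimately show ?thesis using eqv_cong[OF central] by simp
qed

lemma G2: "eqv n (Rf a (b + int n)) (Rf a b)"
proof -
  let ?N = "gx (int n)"
  define U where "U = - gy 1 + gx (1 - a) + gy 1 + gx (1 - b)"
  have e1: "gx (1 - (b + int n)) = gx (1 - b) + - ?N"
    by (metis add_uminus_conv_diff diff_diff_eq gx_add gx_neg)
  have "Rf a (b + int n) = gx a + gy 1 + gx b + (?N + U) + (- ?N + - gy 1)"
    by (simp add: Rf_def e1 gx_add U_def add.assoc del: add_uminus_conv_diff)
  moreover have "Rf a b = gx a + gy 1 + gx b + (U + ?N) + (- ?N + - gy 1)"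
    by (simp add: Rf_def U_def add.assoc del: add_uminus_conv_diff)
  ultimately show ?thesis using eqv_cong[OF central] by simp
qed

lemma centralS: "eqv n (gy 2 + u) (u + gy 2)"
proof -
  have "eqv n (gy 2 + u) (gx (int n) + u)" by (rule eqv_congR[OF eqv_sym[OF eqv_base]])
  moreover have "eqv n (u + gx (int n)) (u + gy 2)" by (rule eqv_congL[OF eqv_base])
  ultimately show ?thesis using central eqv_trans by metis
qed

lemma G3: "eqv n ((gx (1 - b) + gy 1) + Rf a b - (gx (1 - b) + gy 1)) (Rf (1 - b) a)"
proof -
  let ?S = "gy 1 + gy 1"
  have S: "eqv n (?S + u) (u + ?S)" for u using centralS[of n u] by (simp add: gy2)
  have xb: "gx (b - 1) = - gx (1 - b)" by (metis gx_neg minus_diff_eq)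
  define A where "A = gx (1 - b) + gy 1 + gx a + - gy 1"
  define B where "B = gx b + - gy 1 + gx (1 - a) + gy 1 + gx (1 - b)"
  define C where "C = - gy 1 + - gy 1 + - gx (1 - b)"
  have "(gx (1 - b) + gy 1) + Rf a b - (gx (1 - b) + gy 1) = A + (?S + B) + C"
    by (simp add: Rf_def A_def B_def C_def add.assoc diff_conv_add_uminus minus_add del: add_uminus_conv_diff)
  moreover have "eqv n (A + (?S + B) + C) (A + (B + ?S) + C)" by (rule eqv_cong[OF S])
  moreover have "A + (B + ?S) + C = A + gx b + gy 1 + (- ?S + (gx (1 - a) + ?S)) + - gy 1"
    by (simp add: A_def B_def C_def add.assoc minus_add del: add_uminus_conv_diff)
  moreover have "eqv n (A + gx b + gy 1 + (- ?S + (gx (1 - a) + ?S)) + - gy 1)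
                       (A + gx b + gy 1 + (- ?S + (?S + gx (1 - a))) + - gy 1)"
    by (rule eqv_cong[OF eqv_congL[OF eqv_sym[OF S]]])
  moreover have "A + gx b + gy 1 + (- ?S + (?S + gx (1 - a))) + - gy 1 = Rf (1 - b) a"
    by (simp add: Rf_def A_def add.assoc minus_add del: add_uminus_conv_diff)
  ultimately show ?thesis using eqv_trans by metis
qed



lemma shiftA_nat: "eqv n (Rf (a + int m * int n) b) (Rf a b)"
proof (induction m)
  case 0 then show ?case by (simp add: eqv_refl)
next
  case (Suc m)
  have "a + int (Suc m) * int n = (a + int m * int n) + int n" by (simp add: algebra_simps)
  then show ?case using eqv_trans[OF G1[of n "a + int m * int n" b] Suc] by (simp add: add.assoc)
qed

lemma shiftB_nat: "eqv n (Rf a (b + int m * int n)) (Rf a b)"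
proof (induction m)
  case 0 then show ?case by (simp add: eqv_refl)
next
  case (Suc m)
  have "b + int (Suc m) * int n = (b + int m * int n) + int n" by (simp add: algebra_simps)
  then show ?case using eqv_trans[OF G2[of n a "b + int m * int n"] Suc] by (simp add: add.assoc)
qed

lemma shiftA: "eqv n (Rf (a + k * int n) b) (Rf a b)"
proof (cases "0 \<le> k")
  case True
  then have "k = int (nat k)" by simp
  then show ?thesis using shiftA_nat[of n a "nat k" b] by metis
next
  case False
  define m where "m = nat (- k)"
  have k: "k = - int m" using False by (simp add: m_def)
  have "eqv n (Rf ((a + k * int n) + int m * int n) b) (Rf (a + k * int n) b)" by (rule shiftA_nat)
  then show ?thesis using k by (simp add: eqv_sym algebra_simps)
qed

lemma shiftB: "eqv n (Rf a (b + k * int n)) (Rf a b)"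
proof (cases "0 \<le> k")
  case True
  then have "k = int (nat k)" by simp
  then show ?thesis using shiftB_nat[of n a b "nat k"] by metis
next
  case False
  define m where "m = nat (- k)"
  have k: "k = - int m" using False by (simp add: m_def)
  have "eqv n (Rf a ((b + k * int n) + int m * int n)) (Rf a (b + k * int n))" by (rule shiftB_nat)
  then show ?thesis using k by (simp add: eqv_sym algebra_simps)
qed

definition fr :: "nat \<Rightarrow> int \<Rightarrow> int" where "fr n x = (x - 1) mod int n + 1"

lemma fr_decomp: "x = fr n x + ((x - 1) div int n) * int n"
  by (simp add: fr_def)

lemma Q_mod: "P_n n a b \<simeq>\<^sub>Q P_n n (fr n a) (fr n b)"
proof (rule Q_Rf[where w = 0])
  have "eqv n (Rf a b) (Rf (fr n a) b)"
    using shiftA[of n "fr n a" "(a - 1) div int n" b] fr_decomp[of a n] by (metis eqv_sym)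
  moreover have "eqv n (Rf (fr n a) b) (Rf (fr n a) (fr n b))"
    using shiftB[of n "fr n a" "fr n b" "(b - 1) div int n"] fr_decomp[of b n] by (metis eqv_sym)
  ultimately show "eqv n (0 + Rf a b - 0) (Rf (fr n a) (fr n b))" using eqv_trans by simp
qed

lemma Q_rot: "P_n n a b \<simeq>\<^sub>Q P_n n (1 - b) a"
  by (rule Q_Rf[OF G3])

lemma fr_ge: "n \<ge> 1 \<Longrightarrow> 1 \<le> fr n x"
  by (simp add: fr_def)

lemma fr_sum: assumes "n \<ge> 1" shows "fr n x + fr n (1 - x) = int n + 1"
proof -
  define m where "m = int n"
  have m: "m > 0" using assms by (simp add: m_def)
  define p where "p = (x - 1) mod m"
  define q where "q = (- x) mod m"
  have p: "0 \<le> p" "p < m" using m by (simp_all add: p_def)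
  have q: "0 \<le> q" "q < m" using m by (simp_all add: q_def)
  have "(p + q) mod m = (-1) mod m"
    unfolding p_def q_def by (simp add: mod_add_eq)
  also have "(-1) mod m = m - 1" using m by (simp add: zmod_minus1)
  finally have e: "(p + q) mod m = m - 1" .
  have "p + q = m - 1"
  proof (cases "p + q < m")
    case True then show ?thesis using e p q by simp
  next
    case False
    have a: "(p + q - m) mod m = p + q - m" using p q False by (intro mod_pos_pos_trivial) auto
    have "(p + q - m) mod m = (p + q) mod m" by (simp add: mod_diff_right_eq[symmetric])
    then have "(p + q) mod m = p + q - m" using a by simp
    then show ?thesis using e p q by simp
  qed
  then show ?thesis by (simp add: fr_def p_def q_def m_def)
qed

lemma fr_small: assumes "n \<ge> 1"
  shows "fr n x \<le> \<lceil>real n / 2\<rceil> \<or> fr n (1 - x) \<le> \<lceil>real n / 2\<rceil>"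
proof -
  have "real n / 2 \<le> of_int \<lceil>real n / 2\<rceil>" by (rule le_of_int_ceiling)
  then have "real n \<le> 2 * of_int \<lceil>real n / 2\<rceil>" by linarith
  then have "int n \<le> 2 * \<lceil>real n / 2\<rceil>" by linarith
  then show ?thesis using fr_sum[OF assms, of x] by linarith
qed

lemma part_i:
  assumes "n \<ge> 2"
  shows "\<exists>n1' m1' :: int. 1 \<le> n1' \<and> n1' \<le> \<lceil>real n / 2\<rceil> \<and>
                          1 \<le> m1' \<and> m1' \<le> \<lceil>real n / 2\<rceil> \<and>
                          P_n n a b \<simeq>\<^sub>Q P_n n n1' m1'"
proof -
  let ?c = "\<lceil>real n / 2\<rceil>"
  have n1: "n \<ge> 1" using assms by simp
  have r1: "P_n n a b \<simeq>\<^sub>Q P_n n (1 - b) a" by (rule Q_rot)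
  have r2: "P_n n a b \<simeq>\<^sub>Q P_n n (1 - a) (1 - b)"
    using Q_rot[of n "1 - b" a] Q_trans[OF r1] by simp
  have r3: "P_n n a b \<simeq>\<^sub>Q P_n n b (1 - a)"
    using Q_rot[of n "1 - a" "1 - b"] Q_trans[OF r2] by simp
  have g: "\<And>x. 1 \<le> fr n x" using fr_ge[OF n1] .
  consider "fr n a \<le> ?c" "fr n b \<le> ?c" | "fr n a \<le> ?c" "fr n (1 - b) \<le> ?c"
    | "fr n (1 - a) \<le> ?c" "fr n b \<le> ?c" | "fr n (1 - a) \<le> ?c" "fr n (1 - b) \<le> ?c"
    using fr_small[OF n1, of a] fr_small[OF n1, of b] by blast
  then show ?thesis
  proof cases
    case 1 then show ?thesis using Q_mod g by blast
  next
    case 2 then show ?thesis using Q_trans[OF r1 Q_mod] g by blast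
  next
    case 3 then show ?thesis using Q_trans[OF r3 Q_mod] g by blast
  next
    case 4 then show ?thesis using Q_trans[OF r2 Q_mod] g by blast
  qed
qed

definition Sw :: word where "Sw = gpow X 1 @ gpow Y 1 @ gpow X 1 @ gpow Y (-1)"

lemma P_std_Sw: "P_std n = [r1 n, red Sw]"
  by (simp add: P_std_def r1_def Sw_def)

lemma abs_Sw: "abs_fg Sw = gx 1 + gy 1 + gx 1 + - gy 1"
  by (simp add: Sw_def abs_append gx_def[symmetric] gy_def[symmetric] gym1 add.assoc diff_conv_add_uminus del: add_uminus_conv_diff)

lemma gx_comb: "gx b + (gx (1 - b) + z) = gx 1 + z"
  by (simp add: add.assoc[symmetric] gx_add[symmetric])

lemma part_ii1: "P_n n 1 b \<simeq>\<^sub>Q P_std n"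
proof -
  have "red (Rw 1 b) = red Sw"
    by (rule red_eqI) (simp add: abs_Rw abs_Sw Rf_def add.assoc gx_comb del: add_uminus_conv_diff)
  then show ?thesis by (simp add: P_n_Rw P_std_Sw Q_refl)
qed

lemma part_ii2: "P_n n a 1 \<simeq>\<^sub>Q P_std n"
  unfolding P_n_Rw P_std_Sw
proof (rule master[where w = "gx (1 - a)"])
  have "gx (1 - a) + Rf a 1 - gx (1 - a) = abs_fg Sw"
    using gx_comb[of "1 - a"]
    by (simp add: abs_Sw Rf_def add.assoc diff_conv_add_uminus del: add_uminus_conv_diff)
  then show "eqv n (gx (1 - a) + abs_fg (Rw a 1) - gx (1 - a)) (abs_fg Sw)"
    by (simp add: abs_Rw eqv_refl)
qed


theorem corollary3p6:
  fixes n :: nat and n1 m1 :: int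
  assumes "n \<ge> 2" and "n1 \<noteq> 0" and "m1 \<noteq> 0"
  shows "(\<exists>n1' m1' :: int. 1 \<le> n1' \<and> n1' \<le> \<lceil>real n / 2\<rceil> \<and>
                          1 \<le> m1' \<and> m1' \<le> \<lceil>real n / 2\<rceil> \<and>
                          P_n n n1 m1 \<simeq>\<^sub>Q P_n n n1' m1')
       \<and> ((n1 = 1 \<or> m1 = 1) \<longrightarrow> P_n n n1 m1 \<simeq>\<^sub>Q P_std n)"
  using part_i[OF assms(1)] part_ii1 part_ii2 by blast

end
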